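(* For any $w, w' \in \mathcal{C}\langle A \rangle$ and $\bullet \in \{\ast, \mathrm{sh}\}$, \[ \iota(w \bullet_{\hbar} w')=\iota(w) \bullet \iota(w'), \] where $\bullet_\hbar$ denotes $\ast_\hbar$ if $\bullet=\ast$ and $\mathrm{sh}_\hbar$ if $\bullet=\mathrm{sh}$.
   Context: Let $\mathcal{C}=\mathbb{Q}[\hbar]$ ($\hbar$ formal), $\mathfrak{H}=\mathcal{C}\langle a,b\rangle$ the non-commutative polynomial ring. For $k\ge1$, $g_k=ba^k$. $A=\{\hbar b\}\cup\{ba^k\mid k\ge1\}$ (an algebraically independent set), $\mathcal{C}\langle A\rangle$ the $\mathcal{C}$-subalgebra generated by $1$ and $A$, $\mathfrak z$ the $\mathcal C$-span of $A$. Harmonic product: $\circ_\hbar$ symmetric $\mathcal C$-bilinear on $\mathfrak z$ with $(\hbar b)\circ_\hbar(\hbar b)=\hbar\cdot\hbar b$, $(\hbar b)\circ_\hbar g_k=\hbar g_k$, $g_k\circ_\hbar g_l=g_{k+l}$; $\ast_\hbar$ on $\mathcal{C}\langle A\rangle$: $w\ast_\hbar1=1\ast_\hbar w=w$, $(wu)\ast_\hbar(w'v)=(w\ast_\hbar w'v)u+(wu\ast_\hbar w')v+(w\ast_\hbar w')(u\circ_\hbar v)$ ($u,v\in A$). Shuffle product $\mathrm{sh}_\hbar$ on $\mathfrak H$: $\mathcal C$-bilinear with $w\,\mathrm{sh}_\hbar\,1=1\,\mathrm{sh}_\hbar\,w=w$, $wa\,\mathrm{sh}_\hbar\,w'a=(wa\,\mathrm{sh}_\hbar\,w'+w\,\mathrm{sh}_\hbar\,w'a+\hbar(w\,\mathrm{sh}_\hbar\,w'))a$,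 $wb\,\mathrm{sh}_\hbar\,w'=w\,\mathrm{sh}_\hbar\,w'b=(w\,\mathrm{sh}_\hbar\,w')b$; $\mathcal C\langle A\rangle$ is closed under it. Classical side: $\mathfrak h=\mathbb{Q}\langle x,y\rangle$, $z_k=yx^{k-1}$, $\mathfrak h^1=\mathbb Q+y\mathfrak h$ (the free algebra on $z_1,z_2,\dots$). Harmonic product $\ast$ on $\mathfrak h^1$: $w\ast1=1\ast w=w$, $(wz_k)\ast(w'z_l)=(w\ast w'z_l)z_k+(wz_k\ast w')z_l+(w\ast w')z_{k+l}$; shuffle product $\mathrm{sh}$ on $\mathfrak h$: $w\,\mathrm{sh}\,1=1\,\mathrm{sh}\,w=w$, $(wu)\,\mathrm{sh}\,(w'v)=(w\,\mathrm{sh}\,w'v)u+(wu\,\mathrm{sh}\,w')v$ ($u,v\in\{x,y\}$). $\iota:\mathcal C\langle A\rangle\to\mathfrak h^1$ is the unital $\mathbb Q$-algebra homomorphism (for concatenation) with $\iota(\hbar)=0$, $\iota(\hbar b)=0$ and $\iota(g_k)=z_k$ for $k\ge1$. *)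

theory Defs
  imports "HOL-Computational_Algebra.Polynomial"
begin

text \<open>A (finite) linear combination of words of type 'w with coefficients in 'c is
  represented as a function 'w => 'c (finitely supported where it matters).\<close>

definition mono :: "'c::zero_neq_one \<Rightarrow> 'w \<Rightarrow> 'w \<Rightarrow> 'c" where
  "mono c u = (\<lambda>v. if v = u then c else 0)"

definition lin :: "('a \<Rightarrow> 'c::comm_ring_1) \<Rightarrow> ('a \<Rightarrow> 'b \<Rightarrow> 'c) \<Rightarrow> 'b \<Rightarrow> 'c" where
  "lin V F = (\<lambda>u. \<Sum>\<alpha>\<in>{\<alpha>. V \<alpha> \<noteq> 0}. V \<alpha> * F \<alpha> u)"

definition bilin :: "('a \<Rightarrow> 'c::comm_ring_1) \<Rightarrow> ('b \<Rightarrow> 'c) \<Rightarrow> ('a \<Rightarrow> 'b \<Rightarrow> 'd \<Rightarrow> 'c) \<Rightarrow> 'd \<Rightarrow> 'c" where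
  "bilin V W F = lin V (\<lambda>\<alpha>. lin W (F \<alpha>))"

text \<open>Prepending a letter on reversed words = appending it on the right of ordinary words.\<close>
definition prep :: "'l \<Rightarrow> ('l list \<Rightarrow> 'c::zero) \<Rightarrow> 'l list \<Rightarrow> 'c" where
  "prep l F = (\<lambda>x. case x of [] \<Rightarrow> 0 | y # ys \<Rightarrow> if y = l then F ys else 0)"

definition fsupp :: "('w \<Rightarrow> 'c::zero) \<Rightarrow> bool" where
  "fsupp f \<longleftrightarrow> finite {u. f u \<noteq> 0}"

datatype ab = La | Lb

type_synonym hel = "ab list \<Rightarrow> rat poly"

definition hbar :: "rat poly" where "hbar = [:0, 1:]"

text \<open>Letters of A: HB stands for hbar b, G k stands for g_k = b a^k (k >= 1).\<close>
datatype Alet = HB | G nat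

definition admA :: "Alet list \<Rightarrow> bool" where
  "admA \<alpha> \<longleftrightarrow> (\<forall>k. G k \<in> set \<alpha> \<longrightarrow> 1 \<le> k)"

fun lw :: "Alet \<Rightarrow> ab list" where
  "lw HB = [Lb]"
| "lw (G k) = Lb # replicate k La"

definition embw :: "Alet list \<Rightarrow> hel" where
  "embw \<alpha> = mono (hbar ^ length (filter (\<lambda>l. l = HB) \<alpha>)) (concat (map lw \<alpha>))"

definition Areps :: "(Alet list \<Rightarrow> rat poly) set" where
  "Areps = {V. fsupp V \<and> (\<forall>\<alpha>. V \<alpha> \<noteq> 0 \<longrightarrow> admA \<alpha>)}"

text \<open>C<A>: the C-subalgebra of \<open>\<frak>H\<close> generated by 1 and A (= C-span of products of elements of A).\<close>
definition CA :: "hel set" where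
  "CA = {lin V embw | V. V \<in> Areps}"

text \<open>Coordinates of an element of C<A> w.r.t. the (algebraically independent) set A.\<close>
definition Arep :: "hel \<Rightarrow> Alet list \<Rightarrow> rat poly" where
  "Arep f = (THE V. V \<in> Areps \<and> lin V embw = f)"

fun circA :: "Alet \<Rightarrow> Alet \<Rightarrow> rat poly \<times> Alet" where
  "circA HB HB = (hbar, HB)"
| "circA HB (G k) = (hbar, G k)"
| "circA (G k) HB = (hbar, G k)"
| "circA (G k) (G l) = (1, G (k + l))"

text \<open>Harmonic product of A-words, computed on reversed words (last letter first).\<close>
fun harmR :: "Alet list \<Rightarrow> Alet list \<Rightarrow> Alet list \<Rightarrow> rat poly" where
  "harmR [] w = mono 1 w"
| "harmR w [] = mono 1 w"
| "harmR (u # w) (v # w') =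
     (\<lambda>x. prep u (harmR w (v # w')) x + prep v (harmR (u # w) w') x
          + fst (circA u v) * prep (snd (circA u v)) (harmR w w') x)"

definition harmA :: "Alet list \<Rightarrow> Alet list \<Rightarrow> Alet list \<Rightarrow> rat poly" where
  "harmA \<alpha> \<beta> = (\<lambda>\<gamma>. harmR (rev \<alpha>) (rev \<beta>) (rev \<gamma>))"

definition harmH :: "hel \<Rightarrow> hel \<Rightarrow> hel" where
  "harmH f g = lin (bilin (Arep f) (Arep g) harmA) embw"

fun shHR :: "ab list \<Rightarrow> ab list \<Rightarrow> ab list \<Rightarrow> rat poly" where
  "shHR [] w = mono 1 w"
| "shHR w [] = mono 1 w"
| "shHR (Lb # w) w' = prep Lb (shHR w w')"
| "shHR w (Lb # w') = prep Lb (shHR w w')"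
| "shHR (La # w) (La # w') =
     prep La (\<lambda>x. shHR (La # w) w' x + shHR w (La # w') x + hbar * shHR w w' x)"

definition shHw :: "ab list \<Rightarrow> ab list \<Rightarrow> ab list \<Rightarrow> rat poly" where
  "shHw u v = (\<lambda>x. shHR (rev u) (rev v) (rev x))"

definition shH :: "hel \<Rightarrow> hel \<Rightarrow> hel" where
  "shH f g = bilin f g shHw"

datatype xy = X | Y

type_synonym hcl = "xy list \<Rightarrow> rat"

text \<open>z_k = y x^(k-1); a word in the z's is given by its index list.\<close>
definition zw :: "nat list \<Rightarrow> xy list" where
  "zw ks = concat (map (\<lambda>k. Y # replicate (k - 1) X) ks)"

definition Zreps :: "(nat list \<Rightarrow> rat) set" where
  "Zreps = {K. fsupp K \<and> (\<forall>ks. K ks \<noteq> 0 \<longrightarrow> (\<forall>k\<in>set ks. 1 \<le> k))}"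

definition Zrep :: "hcl \<Rightarrow> nat list \<Rightarrow> rat" where
  "Zrep f = (THE K. K \<in> Zreps \<and> lin K (\<lambda>ks. mono 1 (zw ks)) = f)"

fun harmZR :: "nat list \<Rightarrow> nat list \<Rightarrow> nat list \<Rightarrow> rat" where
  "harmZR [] w = mono 1 w"
| "harmZR w [] = mono 1 w"
| "harmZR (k # w) (l # w') =
     (\<lambda>x. prep k (harmZR w (l # w')) x + prep l (harmZR (k # w) w') x
          + prep (k + l) (harmZR w w') x)"

definition harmZ :: "nat list \<Rightarrow> nat list \<Rightarrow> nat list \<Rightarrow> rat" where
  "harmZ ks ls = (\<lambda>ms. harmZR (rev ks) (rev ls) (rev ms))"

definition harmC :: "hcl \<Rightarrow> hcl \<Rightarrow> hcl" where
  "harmC f g = lin (bilin (Zrep f) (Zrep g) harmZ) (\<lambda>ks. mono 1 (zw ks))"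

fun shCR :: "xy list \<Rightarrow> xy list \<Rightarrow> xy list \<Rightarrow> rat" where
  "shCR [] w = mono 1 w"
| "shCR w [] = mono 1 w"
| "shCR (u # w) (v # w') = (\<lambda>x. prep u (shCR w (v # w')) x + prep v (shCR (u # w) w') x)"

definition shCw :: "xy list \<Rightarrow> xy list \<Rightarrow> xy list \<Rightarrow> rat" where
  "shCw u v = (\<lambda>x. shCR (rev u) (rev v) (rev x))"

definition shC :: "hcl \<Rightarrow> hcl \<Rightarrow> hcl" where
  "shC f g = bilin f g shCw"

text \<open>iota on A-words: the concatenation homomorphism with iota(hbar b) = 0, iota(g_k) = z_k.\<close>
fun iletter :: "Alet \<Rightarrow> nat option" where
  "iletter HB = None"
| "iletter (G k) = Some k"

definition iwA :: "Alet list \<Rightarrow> hcl" where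
  "iwA \<alpha> = (if HB \<in> set \<alpha> then (\<lambda>_. 0)
            else mono 1 (zw (map (\<lambda>l. case l of G k \<Rightarrow> k | HB \<Rightarrow> 0) \<alpha>)))"

text \<open>iota(c * alpha) = c(0) * iota(alpha), since iota(hbar) = 0 (Q-algebra map Q[hbar] -> Q).\<close>
definition iota :: "hel \<Rightarrow> hcl" where
  "iota f = lin (\<lambda>\<alpha>. poly (Arep f \<alpha>) 0) iwA"

end

theory Submission
  imports Defs
begin


definition word :: "Alet list \<Rightarrow> ab list" where "word \<alpha> = concat (map lw \<alpha>)"
definition nHB :: "Alet list \<Rightarrow> nat" where "nHB \<alpha> = length (filter (\<lambda>l. l = HB) \<alpha>)"

fun Nb :: "ab list \<Rightarrow> nat" where
  "Nb [] = 0"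
| "Nb (La # w) = Nb w"
| "Nb (Lb # w) = (if w = [] \<or> hd w = Lb then 1 else 0) + Nb w"

function dec :: "ab list \<Rightarrow> Alet list" where
  "dec [] = []"
| "dec (La # w) = dec w"
| "dec (Lb # w) = (let n = length (takeWhile (\<lambda>c. c = La) w) in
      (if n = 0 then HB else G n) # dec (drop n w))"
  by pat_completeness auto
termination by (relation "measure length") auto

lemma word_simps[simp]: "word [] = []" "word (u # \<alpha>) = lw u @ word \<alpha>"
  by (auto simp: word_def)

lemma word_start: "word \<alpha> = [] \<or> hd (word \<alpha>) = Lb"
proof (cases \<alpha>)
  case (Cons u r) then show ?thesis by (cases u) auto
qed simp

lemma tw_rep: "(w = [] \<or> hd w = Lb) \<Longrightarrow> takeWhile (\<lambda>c. c = La) (replicate k La @ w) = replicate k La"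
  by (induct k) (cases w; auto)+

lemma dec_word: "admA \<alpha> \<Longrightarrow> dec (word \<alpha>) = \<alpha>"
proof (induct \<alpha>)
  case Nil then show ?case by simp
next
  case (Cons u \<alpha>)
  have adm: "admA \<alpha>" using Cons.prems by (auto simp: admA_def)
  have st: "word \<alpha> = [] \<or> hd (word \<alpha>) = Lb" by (rule word_start)
  have dr: "drop k (replicate k La @ w) = w" for k w by simp
  show ?case
  proof (cases u)
    case HB
    then show ?thesis using Cons adm st by (cases "word \<alpha>") (auto simp: Let_def)
  next
    case (G k)
    with Cons.prems have "1 \<le> k" by (auto simp: admA_def)
    then show ?thesis using Cons adm G tw_rep[OF st, of k] by (simp add: Let_def)
  qed
qed

lemma word_inj: "admA \<alpha> \<Longrightarrow> admA \<beta> \<Longrightarrow> word \<alpha> = word \<beta> \<Longrightarrow> \<alpha> = \<beta>"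
  by (metis dec_word)

lemma dec_adm: "admA (dec u)"
  by (induct u rule: dec.induct) (auto simp: admA_def Let_def Suc_le_eq)

lemma word_dec: "u = [] \<or> hd u = Lb \<Longrightarrow> word (dec u) = u"
proof (induct u rule: dec.induct)
  case 1 then show ?case by simp
next
  case (2 w) then show ?case by simp
next
  case (3 w)
  define n where "n = length (takeWhile (\<lambda>c. c = La) w)"
  have tw: "takeWhile (\<lambda>c. c = La) w = replicate n La"
    unfolding n_def by (rule replicate_length_same[symmetric]) (auto dest: set_takeWhileD)
  have dw: "drop n w = dropWhile (\<lambda>c. c = La) w"
    unfolding n_def by (simp add: dropWhile_eq_drop)
  have st: "drop n w = [] \<or> hd (drop n w) = Lb"
    unfolding dw using hd_dropWhile[of "\<lambda>c. c = La" w]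
    by (cases "hd (dropWhile (\<lambda>c. c = La) w)") auto
  have ih: "word (dec (drop n w)) = drop n w" using 3(1)[OF n_def st] .
  have rw: "replicate n La @ drop n w = w"
  proof -
    have "take n w = takeWhile (\<lambda>c. c = La) w" unfolding n_def by (rule takeWhile_eq_take[symmetric])
    then show ?thesis using tw append_take_drop_id[of n w] by simp
  qed
  have d: "dec (Lb # w) = (if n = 0 then HB else G n) # dec (drop n w)"
    by (simp add: Let_def n_def)
  have l: "lw (if n = 0 then HB else G n) = Lb # replicate n La" by simp
  show ?case unfolding d word_simps l ih using rw by simp
qed

lemma Nb_word: "admA \<alpha> \<Longrightarrow> Nb (word \<alpha>) = nHB \<alpha>"
proof (induct \<alpha>)
  case Nil then show ?case by (simp add: nHB_def)
next
  case (Cons u \<alpha>)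
  have adm: "admA \<alpha>" using Cons.prems by (auto simp: admA_def)
  have st: "word \<alpha> = [] \<or> hd (word \<alpha>) = Lb" by (rule word_start)
  have nr: "Nb (replicate k La @ w) = Nb w" for k w by (induct k) auto
  show ?case
  proof (cases u)
    case HB
    then show ?thesis using Cons adm st by (auto simp: nHB_def)
  next
    case (G k)
    with Cons.prems have "1 \<le> k" by (auto simp: admA_def)
    then obtain j where "k = Suc j" by (cases k) auto
    then show ?thesis using Cons adm G nr by (auto simp: nHB_def)
  qed
qed



lemma lin_nz: "lin V F u \<noteq> 0 \<Longrightarrow> \<exists>\<alpha>. V \<alpha> \<noteq> 0 \<and> F \<alpha> u \<noteq> 0"
proof (rule ccontr)
  assume a: "lin V F u \<noteq> 0" "\<not> (\<exists>\<alpha>. V \<alpha> \<noteq> 0 \<and> F \<alpha> u \<noteq> 0)"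
  then have "\<forall>\<alpha>\<in>{\<alpha>. V \<alpha> \<noteq> 0}. V \<alpha> * F \<alpha> u = 0" by auto
  then have "lin V F u = 0" unfolding lin_def by (rule sum.neutral)
  then show False using a by simp
qed

lemma bilin_nz: "bilin V W F d \<noteq> 0 \<Longrightarrow> \<exists>\<alpha> \<beta>. V \<alpha> \<noteq> 0 \<and> W \<beta> \<noteq> 0 \<and> F \<alpha> \<beta> d \<noteq> 0"
  unfolding bilin_def by (blast dest: lin_nz)

lemma lin_single:
  assumes "fsupp V" "\<And>\<alpha>. V \<alpha> \<noteq> 0 \<Longrightarrow> \<alpha> \<noteq> a \<Longrightarrow> F \<alpha> u = 0"
  shows "lin V F u = V a * F a u"
proof (cases "V a = 0")
  case True
  have "\<forall>\<alpha>\<in>{\<alpha>. V \<alpha> \<noteq> 0}. V \<alpha> * F \<alpha> u = 0"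
  proof
    fix \<alpha> assume "\<alpha> \<in> {\<alpha>. V \<alpha> \<noteq> 0}"
    then have "V \<alpha> \<noteq> 0" "\<alpha> \<noteq> a" using True by auto
    then show "V \<alpha> * F \<alpha> u = 0" using assms(2) by simp
  qed
  then show ?thesis unfolding lin_def using True by (simp add: sum.neutral)
next
  case False
  have fin: "finite {\<alpha>. V \<alpha> \<noteq> 0}" using assms(1) by (simp add: fsupp_def)
  have "lin V F u = V a * F a u + (\<Sum>\<alpha>\<in>{\<alpha>. V \<alpha> \<noteq> 0} - {a}. V \<alpha> * F \<alpha> u)"
    unfolding lin_def using False fin by (simp add: sum.remove)
  also have "(\<Sum>\<alpha>\<in>{\<alpha>. V \<alpha> \<noteq> 0} - {a}. V \<alpha> * F \<alpha> u) = 0"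
    using assms(2) by (intro sum.neutral) auto
  finally show ?thesis by simp
qed

lemma fsupp_subset: "fsupp g \<Longrightarrow> (\<And>x. f x \<noteq> 0 \<Longrightarrow> g x \<noteq> 0) \<Longrightarrow> fsupp f"
  unfolding fsupp_def by (rule finite_subset[of _ "{x. g x \<noteq> 0}"]) auto

lemma fsupp_bilin:
  assumes "fsupp V" "fsupp W" "\<And>\<alpha> \<beta>. fsupp (F \<alpha> \<beta>)"
  shows "fsupp (bilin V W F)"
proof -
  have "{d. bilin V W F d \<noteq> 0} \<subseteq> (\<Union>\<alpha>\<in>{\<alpha>. V \<alpha> \<noteq> 0}. \<Union>\<beta>\<in>{\<beta>. W \<beta> \<noteq> 0}. {d. F \<alpha> \<beta> d \<noteq> 0})"
  proof
    fix d assume "d \<in> {d. bilin V W F d \<noteq> 0}"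
    then obtain \<alpha> \<beta> where "V \<alpha> \<noteq> 0 \<and> W \<beta> \<noteq> 0 \<and> F \<alpha> \<beta> d \<noteq> 0" using bilin_nz[of V W F d] by auto
    then show "d \<in> (\<Union>\<alpha>\<in>{\<alpha>. V \<alpha> \<noteq> 0}. \<Union>\<beta>\<in>{\<beta>. W \<beta> \<noteq> 0}. {d. F \<alpha> \<beta> d \<noteq> 0})" by blast
  qed
  moreover have "finite (\<Union>\<alpha>\<in>{\<alpha>. V \<alpha> \<noteq> 0}. \<Union>\<beta>\<in>{\<beta>. W \<beta> \<noteq> 0}. {d. F \<alpha> \<beta> d \<noteq> 0})"
    using assms unfolding fsupp_def by (intro finite_UN_I) auto
  ultimately show ?thesis unfolding fsupp_def by (rule finite_subset)
qed

lemma hbar_nz: "hbar \<noteq> 0" by (simp add: hbar_def)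

lemma embw_eq: "embw \<alpha> u = (if u = word \<alpha> then hbar ^ nHB \<alpha> else 0)"
  by (simp add: embw_def mono_def word_def nHB_def)

lemma lin_embw:
  assumes "V \<in> Areps"
  shows "lin V embw u = (if word (dec u) = u then V (dec u) * hbar ^ nHB (dec u) else 0)"
proof -
  have fs: "fsupp V" and ad: "\<And>\<alpha>. V \<alpha> \<noteq> 0 \<Longrightarrow> admA \<alpha>" using assms by (auto simp: Areps_def)
  have "lin V embw u = V (dec u) * embw (dec u) u"
  proof (rule lin_single[OF fs])
    fix \<alpha> assume "V \<alpha> \<noteq> 0" "\<alpha> \<noteq> dec u"
    then show "embw \<alpha> u = 0" using ad dec_word by (auto simp: embw_eq)
  qed
  then show ?thesis by (auto simp: embw_eq)
qed

lemma Areps_unique: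
  assumes "V \<in> Areps" "W \<in> Areps" "lin V embw = lin W embw"
  shows "V = W"
proof
  fix \<alpha>
  show "V \<alpha> = W \<alpha>"
  proof (cases "admA \<alpha>")
    case True
    have "lin V embw (word \<alpha>) = lin W embw (word \<alpha>)" using assms(3) by simp
    then have "V \<alpha> * hbar ^ nHB \<alpha> = W \<alpha> * hbar ^ nHB \<alpha>"
      unfolding lin_embw[OF assms(1)] lin_embw[OF assms(2)] dec_word[OF True] by simp
    then show ?thesis using hbar_nz by simp
  next
    case False
    then have "V \<alpha> = 0" "W \<alpha> = 0" using assms(1,2) by (auto simp: Areps_def)
    then show ?thesis by simp
  qed
qed

lemma Arep_lin: "V \<in> Areps \<Longrightarrow> Arep (lin V embw) = V"
  unfolding Arep_def by (rule the_equality) (auto intro: Areps_unique)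

lemma Arep_CA: "f \<in> CA \<Longrightarrow> Arep f \<in> Areps \<and> lin (Arep f) embw = f"
  unfolding CA_def using Arep_lin by auto

definition goodA :: "hel \<Rightarrow> bool" where
  "goodA f \<longleftrightarrow> fsupp f \<and> (\<forall>u. f u \<noteq> 0 \<longrightarrow> (u = [] \<or> hd u = Lb) \<and> hbar ^ Nb u dvd f u)"

lemma CA_good: assumes "f \<in> CA" shows "goodA f"
proof -
  obtain V where V: "V \<in> Areps" "f = lin V embw" using assms by (auto simp: CA_def)
  have fs: "fsupp V" using V by (auto simp: Areps_def)
  have fu: "f u = (if word (dec u) = u then V (dec u) * hbar ^ nHB (dec u) else 0)" for u
    using lin_embw[OF V(1)] V(2) by simp
  have "fsupp f"
  proof -
    have "{u. f u \<noteq> 0} \<subseteq> word ` {\<alpha>. V \<alpha> \<noteq> 0}"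
    proof
      fix u assume "u \<in> {u. f u \<noteq> 0}"
      then have "word (dec u) = u" "V (dec u) \<noteq> 0" using fu[of u] by (auto split: if_splits)
      then show "u \<in> word ` {\<alpha>. V \<alpha> \<noteq> 0}" by (intro image_eqI[of _ _ "dec u"]) auto
    qed
    then show ?thesis using fs unfolding fsupp_def by (meson finite_imageI finite_subset)
  qed
  moreover have "(u = [] \<or> hd u = Lb) \<and> hbar ^ Nb u dvd f u" if "f u \<noteq> 0" for u
  proof -
    have w: "word (dec u) = u" using that fu by (auto split: if_splits)
    have "Nb u = nHB (dec u)" using Nb_word[OF dec_adm, of u] w by simp
    then show ?thesis using w word_start[of "dec u"] fu by auto
  qed
  ultimately show ?thesis unfolding goodA_def by blast
qed

lemma good_CA: assumes "goodA f" shows "f \<in> CA"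
proof -
  have fs: "fsupp f" and g: "\<And>u. f u \<noteq> 0 \<Longrightarrow> (u = [] \<or> hd u = Lb) \<and> hbar ^ Nb u dvd f u"
    using assms by (auto simp: goodA_def)
  define V where "V \<alpha> = (if admA \<alpha> then f (word \<alpha>) div hbar ^ nHB \<alpha> else 0)" for \<alpha>
  have "V \<in> Areps"
  proof -
    have "{\<alpha>. V \<alpha> \<noteq> 0} \<subseteq> dec ` {u. f u \<noteq> 0}"
    proof
      fix \<alpha> assume "\<alpha> \<in> {\<alpha>. V \<alpha> \<noteq> 0}"
      then have "admA \<alpha>" "f (word \<alpha>) \<noteq> 0" by (auto simp: V_def split: if_splits)
      then show "\<alpha> \<in> dec ` {u. f u \<noteq> 0}" using dec_word[of \<alpha>] by (intro image_eqI[of _ _ "word \<alpha>"]) auto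
    qed
    then have "fsupp V" using fs unfolding fsupp_def by (meson finite_imageI finite_subset)
    then show ?thesis unfolding Areps_def by (auto simp: V_def)
  qed
  moreover have "lin V embw = f"
  proof
    fix u
    show "lin V embw u = f u"
    proof (cases "word (dec u) = u")
      case True
      have n: "Nb u = nHB (dec u)" using Nb_word[OF dec_adm, of u] True by simp
      have "V (dec u) * hbar ^ nHB (dec u) = f u"
      proof (cases "f u = 0")
        case True then show ?thesis using \<open>word (dec u) = u\<close> by (simp add: V_def dec_adm)
      next
        case False
        then have "hbar ^ nHB (dec u) dvd f u" using g[OF False] n by simp
        then show ?thesis using \<open>word (dec u) = u\<close> by (simp add: V_def dec_adm)
      qed
      then show ?thesis using lin_embw[OF \<open>V \<in> Areps\<close>] True by simp
    next
      case False
      then have "f u = 0" using g[of u] word_dec[of u] by (cases "f u = 0") auto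
      then show ?thesis using lin_embw[OF \<open>V \<in> Areps\<close>] False by simp
    qed
  qed
  ultimately show ?thesis unfolding CA_def by blast
qed



lemma Nb_snoc_b: "Nb (w @ [Lb]) = Nb w + 1"
  by (induct w rule: Nb.induct) (auto simp: hd_append)

lemma Nb_last: "w \<noteq> [] \<Longrightarrow> last w = Lb \<Longrightarrow> 1 \<le> Nb w"
  by (induct w rule: Nb.induct) (auto split: if_splits)

lemma Nb_snoc_a: "Nb (w @ [La]) = Nb w - (if w \<noteq> [] \<and> last w = Lb then 1 else 0)"
proof (induct w rule: Nb.induct)
  case 1 then show ?case by simp
next
  case (2 w) then show ?case by simp
next
  case (3 w)
  show ?case
  proof (cases "w = []")
    case True then show ?thesis by simp
  next
    case False
    have "w \<noteq> [] \<Longrightarrow> last w = Lb \<Longrightarrow> 1 \<le> Nb w" by (rule Nb_last)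
    then show ?thesis using 3 False by (auto simp: hd_append)
  qed
qed

definition sb :: "ab list \<Rightarrow> bool" where "sb r \<longleftrightarrow> r \<noteq> [] \<and> hd r = Lb"
definition DD :: "ab list \<Rightarrow> nat" where "DD r = Nb (rev r)"

lemma DD_simps[simp]: "DD [] = 0" "DD (Lb # r) = DD r + 1"
  "DD (La # r) = DD r - (if sb r then 1 else 0)"
  by (auto simp: DD_def sb_def Nb_snoc_b Nb_snoc_a last_rev)

lemma DD_sb: "sb r \<Longrightarrow> 1 \<le> DD r"
  by (cases r) (auto simp: sb_def)

lemma mono_Cons: "mono 1 (l # r) = prep l (mono 1 r)"
  by (auto simp: mono_def prep_def fun_eq_iff split: list.splits)

lemma shHR_Nil2[simp]: "shHR w [] = mono 1 w"
  by (cases w) auto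

lemma shHR_Lb1: "shHR (Lb # r) s = prep Lb (shHR r s)"
  by (cases s) (auto simp: mono_Cons)


lemma shHR_Nil_Lb: "shHR [] (Lb # s) = prep Lb (shHR [] s)"
  by (simp add: mono_Cons)

lemma prep_nz: "prep l F t \<noteq> 0 \<Longrightarrow> \<exists>t'. t = l # t' \<and> F t' \<noteq> 0"
  by (auto simp: prep_def split: list.splits if_splits)

lemma shHR_sb1: "shHR u v t \<noteq> 0 \<Longrightarrow> sb u \<Longrightarrow> sb t"
  by (cases u) (auto simp: sb_def shHR_Lb1 dest!: prep_nz)

lemma shHR_sb2: "shHR u v t \<noteq> 0 \<Longrightarrow> sb v \<Longrightarrow> sb t"
proof (cases v)
  case (Cons l s)
  assume a: "shHR u v t \<noteq> 0" "sb v"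
  then have l: "l = Lb" using Cons by (simp add: sb_def)
  show ?thesis
  proof (cases u)
    case Nil then show ?thesis using a Cons l by (auto simp: sb_def mono_def split: if_splits)
  next
    case (Cons x r) then show ?thesis using a \<open>v = l # s\<close> l
      by (cases x) (auto simp: sb_def shHR_Lb1 dest!: prep_nz)
  qed
qed (simp add: sb_def)

lemma shHR_tNil: "shHR u v [] \<noteq> 0 \<Longrightarrow> u = [] \<and> v = []"
  by (cases "(u,v)" rule: shHR.cases) (auto simp: prep_def mono_def split: if_splits)

lemma fsupp_mono: "fsupp (mono c w)"
  unfolding fsupp_def mono_def by (rule finite_subset[of _ "{w}"]) auto

lemma fsupp_prep: "fsupp F \<Longrightarrow> fsupp (prep l F)"
  unfolding fsupp_def
  by (rule finite_subset[of _ "Cons l ` {x. F x \<noteq> 0}"]) (auto dest!: prep_nz)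

lemma fsupp_add: "fsupp (F :: 'a \<Rightarrow> 'b::comm_ring_1) \<Longrightarrow> fsupp F2 \<Longrightarrow> fsupp (\<lambda>x. F x + F2 x)"
  unfolding fsupp_def
  by (rule finite_subset[of _ "{x. F x \<noteq> 0} \<union> {x. F2 x \<noteq> 0}"]) auto

lemma fsupp_cmult: "fsupp (F :: 'a \<Rightarrow> 'b::comm_ring_1) \<Longrightarrow> fsupp (\<lambda>x. c * F x)"
  unfolding fsupp_def
  by (rule finite_subset[of _ "{x. F x \<noteq> 0}"]) auto

lemma fsupp_shHR: "fsupp (shHR u v)"
  by (induct u v rule: shHR.induct)
     (auto intro!: fsupp_prep fsupp_add fsupp_cmult fsupp_mono)

lemma shHR_fb:
  "shHR u v t \<noteq> 0 \<Longrightarrow> (u = [] \<or> last u = Lb) \<Longrightarrow> (v = [] \<or> last v = Lb) \<Longrightarrow> (t = [] \<or> last t = Lb)"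
proof (induct u v arbitrary: t rule: shHR.induct)
  case (1 w) then show ?case by (auto simp: mono_def split: if_splits)
next
  case (2 v va) then show ?case by (auto simp: mono_def split: if_splits)
next
  case (3 w v va)
  then obtain t' where t: "t = Lb # t'" "shHR w (v # va) t' \<noteq> 0" by (auto dest!: prep_nz)
  have "w = [] \<or> last w = Lb" using 3(3) by (auto split: if_splits)
  then have "t' = [] \<or> last t' = Lb" using 3 t by blast
  then show ?case using t by auto
next
  case (4 va w')
  then obtain t' where t: "t = Lb # t'" "shHR (La # va) w' t' \<noteq> 0" by (auto dest!: prep_nz)
  have "w' = [] \<or> last w' = Lb" using 4(4) by (auto split: if_splits)
  then have "t' = [] \<or> last t' = Lb" using 4 t by blast
  then show ?case using t by auto
next
  case (5 w w')
  then obtain t' where t: "t = La # t'"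
    and nz: "shHR (La # w) w' t' + shHR w (La # w') t' + hbar * shHR w w' t' \<noteq> 0"
    by (auto dest!: prep_nz)
  have w: "w \<noteq> []" "last w = Lb" using 5(5) by (auto split: if_splits)
  have w': "w' \<noteq> []" "last w' = Lb" using 5(6) by (auto split: if_splits)
  have "t' \<noteq> [] \<and> last t' = Lb"
  proof (cases "shHR (La # w) w' t' \<noteq> 0")
    case True
    then show ?thesis using 5(1)[OF True] 5(5) w' shHR_tNil[of "La # w" w'] by auto
  next
    case F1: False
    show ?thesis
    proof (cases "shHR w (La # w') t' \<noteq> 0")
      case True
      then show ?thesis using 5(2)[OF True] 5(6) w shHR_tNil[of w "La # w'"] by auto
    next
      case False
      then have "shHR w w' t' \<noteq> 0" using nz F1 by auto
      then show ?thesis using 5(3)[of t'] w w' shHR_tNil[of w w'] by auto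
    qed
  qed
  then show ?case using t by auto
qed

lemma hdvd:
  assumes "hbar ^ a dvd hbar ^ b * x" "a' + b \<le> a + b'"
  shows "hbar ^ a' dvd hbar ^ b' * x"
proof -
  have "hbar ^ (a' + b) dvd hbar ^ (a + b')" using assms(2) by (rule le_imp_power_dvd)
  also have "hbar ^ (a + b') dvd hbar ^ b * x * hbar ^ b'"
    using assms(1) by (simp add: power_add mult_dvd_mono)
  finally have "hbar ^ a' * hbar ^ b dvd (hbar ^ b' * x) * hbar ^ b"
    by (simp add: power_add ac_simps)
  then show ?thesis using hbar_nz by simp
qed

lemma shHR_dvd: "hbar ^ DD t dvd hbar ^ (DD u + DD v) * shHR u v t"
proof (induct u v arbitrary: t rule: shHR.induct)
  case (1 w) then show ?case by (auto simp: mono_def)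
next
  case (2 v va) then show ?case by (auto simp: mono_def)
next
  case (3 w v va)
  show ?case
  proof (cases "\<exists>t'. t = Lb # t'")
    case True
    then obtain t' where t: "t = Lb # t'" by blast
    have "hbar ^ DD t' dvd hbar ^ (DD w + DD (v # va)) * shHR w (v # va) t'" by (rule 3)
    then have "hbar ^ DD t dvd hbar ^ (DD (Lb # w) + DD (v # va)) * shHR w (v # va) t'"
      by (rule hdvd) (simp add: t)
    then show ?thesis using t by (simp add: prep_def)
  next
    case False
    then have "shHR (Lb # w) (v # va) t = 0" by (auto simp: prep_def split: list.splits)
    then show ?thesis by simp
  qed
next
  case (4 va w')
  show ?case
  proof (cases "\<exists>t'. t = Lb # t'")
    case True
    then obtain t' where t: "t = Lb # t'" by blast
    have "hbar ^ DD t' dvd hbar ^ (DD (La # va) + DD w') * shHR (La # va) w' t'" by (rule 4)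
    then have "hbar ^ DD t dvd hbar ^ (DD (La # va) + DD (Lb # w')) * shHR (La # va) w' t'"
      by (rule hdvd) (simp add: t)
    then show ?thesis using t by (simp add: prep_def)
  next
    case False
    then have "shHR (La # va) (Lb # w') t = 0" by (auto simp: prep_def split: list.splits)
    then show ?thesis by simp
  qed
next
  case (5 w w')
  show ?case
  proof (cases "\<exists>t'. t = La # t'")
    case True
    then obtain t' where t: "t = La # t'" by blast
    let ?A = "shHR (La # w) w' t'" and ?B = "shHR w (La # w') t'" and ?C = "shHR w w' t'"
    let ?E = "hbar ^ (DD (La # w) + DD (La # w'))"
    have dA: "hbar ^ DD t dvd ?E * ?A"
    proof (cases "?A = 0")
      case False
      have i: "hbar ^ DD t' dvd hbar ^ (DD (La # w) + DD w') * ?A" by (rule 5(1))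
      have "sb w' \<Longrightarrow> sb t'" using shHR_sb2[OF False] by blast
      then show ?thesis using i t DD_sb[of w'] DD_sb[of t']
        by (elim hdvd) (cases "sb w'"; cases "sb t'"; simp)
    qed simp
    have dB: "hbar ^ DD t dvd ?E * ?B"
    proof (cases "?B = 0")
      case False
      have i: "hbar ^ DD t' dvd hbar ^ (DD w + DD (La # w')) * ?B" by (rule 5(2))
      have "sb w \<Longrightarrow> sb t'" using shHR_sb1[OF False] by blast
      then show ?thesis using i t DD_sb[of w] DD_sb[of t']
        by (elim hdvd) (cases "sb w"; cases "sb t'"; simp)
    qed simp
    have dC: "hbar ^ DD t dvd ?E * (hbar * ?C)"
    proof (cases "?C = 0")
      case False
      have i: "hbar ^ DD t' dvd hbar ^ (DD w + DD w') * ?C" by (rule 5(3))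
      have "sb w \<Longrightarrow> sb t'" "sb w' \<Longrightarrow> sb t'" using shHR_sb1[OF False] shHR_sb2[OF False] by blast+
      then have "hbar ^ DD t dvd hbar ^ (DD (La # w) + DD (La # w') + 1) * ?C"
        using i t DD_sb[of w] DD_sb[of w'] DD_sb[of t']
        by (elim hdvd) (cases "sb w"; cases "sb w'"; cases "sb t'"; simp)
      then show ?thesis by (simp add: ac_simps)
    qed simp
    have "shHR (La # w) (La # w') t = ?A + ?B + hbar * ?C" using t by (simp add: prep_def)
    then show ?thesis using dA dB dC by (simp add: distrib_left)
  next
    case False
    then have "shHR (La # w) (La # w') t = 0" by (auto simp: prep_def split: list.splits)
    then show ?thesis by simp
  qed
qed



fun phL :: "xy \<Rightarrow> ab list" where "phL X = [La]" | "phL Y = [Lb, La]"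
fun rphL :: "xy \<Rightarrow> ab list" where "rphL X = [La]" | "rphL Y = [La, Lb]"
definition phi :: "xy list \<Rightarrow> ab list" where "phi x = concat (map phL x)"
definition rphi :: "xy list \<Rightarrow> ab list" where "rphi x = concat (map rphL x)"

lemma phi_simps[simp]: "phi [] = []" "phi (X # x) = La # phi x" "phi (Y # x) = Lb # La # phi x"
  by (auto simp: phi_def)
lemma rphi_simps[simp]: "rphi [] = []" "rphi (X # x) = La # rphi x" "rphi (Y # x) = La # Lb # rphi x"
  by (auto simp: rphi_def)

lemma rphi_append: "rphi (x @ y) = rphi x @ rphi y" by (simp add: rphi_def)

lemma rev_phi: "rev (phi x) = rphi (rev x)"
proof (induct x)
  case (Cons a x) then show ?case by (cases a) (auto simp: rphi_append)
qed simp

lemma phi_inj: "phi x = phi y \<Longrightarrow> x = y"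
proof (induct x arbitrary: y)
  case Nil
  show ?case
  proof (cases y)
    case (Cons b y') then show ?thesis using Nil by (cases b) auto
  qed simp
next
  case (Cons a x)
  show ?case
  proof (cases y)
    case Nil then show ?thesis using Cons.prems by (cases a) auto
  next
    case (Cons b y') then show ?thesis using Cons.prems Cons.hyps by (cases a; cases b) auto
  qed
qed

lemma rphi_inj: "rphi x = rphi y \<Longrightarrow> x = y"
  by (metis rev_phi phi_inj rev_rev_ident)

lemma prep_Cons[simp]: "prep l F (m # t) = (if m = l then F t else 0)"
  and prep_Nil[simp]: "prep l F [] = 0"
  by (auto simp: prep_def)

lemma sb_simps[simp]: "\<not> sb []" "\<not> sb (La # r)" "sb (Lb # r)"
  by (auto simp: sb_def)

lemma rphi_nsb[simp]: "\<not> sb (rphi q)"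
  by (cases q) (auto simp: sb_def, case_tac a, auto)

lemma prep_Lb_rphi[simp]: "prep Lb F (rphi z) = 0"
  by (cases z) (auto, case_tac a, auto)

lemma shHR_sb_conv: "\<not> sb u \<Longrightarrow> \<not> sb v \<Longrightarrow> shHR u v (Lb # z) = 0"
  by (cases "(u,v)" rule: shHR.cases) (auto simp: sb_def mono_def)

lemma mono_rphi: "mono (1::rat poly) (rphi q) (rphi x) = (if q = x then 1 else 0)"
  by (auto simp: mono_def dest: rphi_inj)

lemma poly_hbar[simp]: "poly hbar 0 = 0" by (simp add: hbar_def)

lemma shS0: "poly (shHR (rphi p) (rphi q) (rphi x)) 0 = shCR p q x"
proof (induct p q arbitrary: x rule: shCR.induct)
  case (1 w) then show ?case by (auto simp: mono_def dest: rphi_inj)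
next
  case (2 v va)
  show ?case by (simp only: rphi_simps(1) shHR_Nil2 mono_rphi) (auto simp: mono_def)
next
  case (3 u w v w')
  consider "x = []" | x' where "x = X # x'" | x' where "x = Y # x'"
    by (metis list.exhaust xy.exhaust)
  then show ?case
  proof cases
    case 1 then show ?thesis by (cases u; cases v) auto
  next
    case 2 then show ?thesis using 3 by (cases u; cases v) (auto simp: shHR_Lb1 shHR_sb_conv)
  next
    case 3 then show ?thesis using "3.hyps" by (cases u; cases v) (auto simp: shHR_Lb1 shHR_sb_conv)
  qed
qed



lemma fsupp_shHw: "fsupp (shHw u v)"
proof -
  have "finite (rev -` {t. shHR (rev u) (rev v) t \<noteq> 0})"
    using fsupp_shHR[of "rev u" "rev v"] unfolding fsupp_def by (intro finite_vimageI) auto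
  then show ?thesis unfolding fsupp_def shHw_def by (simp add: vimage_def)
qed

lemma shHw_dvd: "hbar ^ Nb t dvd hbar ^ (Nb u + Nb v) * shHw u v t"
  using shHR_dvd[of "rev t" "rev u" "rev v"] by (simp add: DD_def shHw_def)

lemma shH_good:
  assumes f: "goodA f" and g: "goodA g"
  shows "goodA (shH f g)"
proof -
  have ff: "fsupp f" and fu: "\<And>u. f u \<noteq> 0 \<Longrightarrow> (u = [] \<or> hd u = Lb) \<and> hbar ^ Nb u dvd f u"
    using f by (auto simp: goodA_def)
  have gf: "fsupp g" and gu: "\<And>u. g u \<noteq> 0 \<Longrightarrow> (u = [] \<or> hd u = Lb) \<and> hbar ^ Nb u dvd g u"
    using g by (auto simp: goodA_def)
  have fs: "fsupp (shH f g)" unfolding shH_def by (rule fsupp_bilin[OF ff gf fsupp_shHw])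
  moreover have "(t = [] \<or> hd t = Lb) \<and> hbar ^ Nb t dvd shH f g t" if nz: "shH f g t \<noteq> 0" for t
  proof
    obtain u v where uv: "f u \<noteq> 0" "g v \<noteq> 0" "shHw u v t \<noteq> 0"
      using bilin_nz[of f g shHw t] nz unfolding shH_def by auto
    have "rev u = [] \<or> last (rev u) = Lb" using fu[OF uv(1)] by (auto simp: last_rev)
    moreover have "rev v = [] \<or> last (rev v) = Lb" using gu[OF uv(2)] by (auto simp: last_rev)
    ultimately have "rev t = [] \<or> last (rev t) = Lb"
      using shHR_fb[of "rev u" "rev v" "rev t"] uv(3) by (auto simp: shHw_def)
    then show "t = [] \<or> hd t = Lb" by (auto simp: last_rev)
  next
    have "hbar ^ Nb t dvd f u * (g v * shHw u v t)" if "f u \<noteq> 0" "g v \<noteq> 0" for u v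
    proof -
      have d1: "hbar ^ Nb u dvd f u" using fu[OF that(1)] by blast
      have d2: "hbar ^ Nb v dvd g v" using gu[OF that(2)] by blast
      obtain a where a: "f u = hbar ^ Nb u * a" using d1 by (rule dvdE)
      obtain b where b: "g v = hbar ^ Nb v * b" using d2 by (rule dvdE)
      have e: "f u * (g v * shHw u v t) = (a * b) * (hbar ^ (Nb u + Nb v) * shHw u v t)"
        unfolding a b power_add by (simp only: mult.assoc mult.left_commute)
      show ?thesis unfolding e by (rule dvd_mult[OF shHw_dvd])
    qed
    then show "hbar ^ Nb t dvd shH f g t"
      unfolding shH_def bilin_def lin_def by (auto simp: sum_distrib_left intro!: dvd_sum)
  qed
  ultimately show ?thesis unfolding goodA_def by blast
qed

lemma shH_CA: "f \<in> CA \<Longrightarrow> g \<in> CA \<Longrightarrow> shH f g \<in> CA"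
  by (rule good_CA, rule shH_good; erule CA_good)

fun unG :: "Alet \<Rightarrow> nat" where "unG (G k) = k" | "unG HB = 0"

lemma HBfree:
  assumes "HB \<notin> set \<alpha>" "admA \<alpha>"
  shows "\<alpha> = map G (map unG \<alpha>) \<and> (\<forall>k\<in>set (map unG \<alpha>). 1 \<le> k)"
  using assms
proof (induct \<alpha>)
  case (Cons a \<alpha>)
  then show ?case by (cases a) (auto simp: admA_def)
qed simp

lemma adm_mapG: "(\<forall>k\<in>set ks. 1 \<le> k) \<Longrightarrow> admA (map G ks)"
  by (auto simp: admA_def)

lemma phi_zw: "(\<forall>k\<in>set ks. 1 \<le> k) \<Longrightarrow> phi (zw ks) = word (map G ks)"
proof (induct ks)
  case Nil then show ?case by (simp add: zw_def)
next
  case (Cons k ks)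
  then obtain j where k: "k = Suc j" by (cases k) auto
  have r: "phi (replicate j X @ w) = replicate j La @ phi w" for w by (induct j) auto
  have "zw (k # ks) = Y # replicate j X @ zw ks" by (simp add: zw_def k)
  then show ?case using Cons r k by simp
qed

lemma nHB0: "nHB \<alpha> = 0 \<longleftrightarrow> HB \<notin> set \<alpha>"
  by (auto simp: nHB_def filter_empty_conv)

lemma poly_hbar_dvd: "hbar ^ n dvd p \<Longrightarrow> 1 \<le> n \<Longrightarrow> poly p 0 = 0"
  by (cases n) (auto simp: hbar_def elim!: dvdE)

lemma good_range:
  assumes "goodA f" "poly (f u) 0 \<noteq> 0"
  shows "u \<in> range phi"
proof -
  have fu: "f u \<noteq> 0" using assms(2) by auto
  then have st: "u = [] \<or> hd u = Lb" and dv: "hbar ^ Nb u dvd f u" using assms(1) by (auto simp: goodA_def)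
  have "Nb u = 0" using poly_hbar_dvd[OF dv] assms(2) by (cases "Nb u") auto
  have w: "word (dec u) = u" using word_dec[OF st] .
  have "nHB (dec u) = 0" using Nb_word[OF dec_adm, of u] w \<open>Nb u = 0\<close> by simp
  then have "HB \<notin> set (dec u)" by (simp add: nHB0)
  from HBfree[OF this dec_adm] have
    "dec u = map G (map unG (dec u))" "\<forall>k\<in>set (map unG (dec u)). 1 \<le> k" by auto
  then have "phi (zw (map unG (dec u))) = u" using phi_zw w by metis
  then show ?thesis by (metis rangeI)
qed

definition ev :: "hel \<Rightarrow> hcl" where "ev f x = poly (f (phi x)) 0"

lemma inj_phi: "inj phi" by (auto intro: injI phi_inj)

lemma fsupp_ev: "fsupp f \<Longrightarrow> fsupp (ev f)"
proof -
  assume "fsupp f"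
  then have "finite (phi -` {u. f u \<noteq> 0})" unfolding fsupp_def by (intro finite_vimageI inj_phi)
  then show ?thesis unfolding fsupp_def ev_def
    by (rule finite_subset[rotated]) auto
qed

lemma reidx2:
  assumes "goodA f"
  shows "(\<Sum>u\<in>{u. f u \<noteq> 0}. poly (f u) 0 * T u) = (\<Sum>p\<in>{p. ev f p \<noteq> 0}. ev f p * T (phi p))"
proof -
  have fin: "finite {u. f u \<noteq> 0}" using assms by (auto simp: goodA_def fsupp_def)
  have "(\<Sum>u\<in>{u. f u \<noteq> 0}. poly (f u) 0 * T u) = (\<Sum>u\<in>{u. poly (f u) 0 \<noteq> 0}. poly (f u) 0 * T u)"
    by (rule sum.mono_neutral_right[OF fin]) auto
  also have "{u. poly (f u) 0 \<noteq> 0} = phi ` {p. ev f p \<noteq> 0}"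
  proof
    show "{u. poly (f u) 0 \<noteq> 0} \<subseteq> phi ` {p. ev f p \<noteq> 0}"
    proof
      fix u assume "u \<in> {u. poly (f u) 0 \<noteq> 0}"
      then have nz: "poly (f u) 0 \<noteq> 0" by simp
      then obtain p where "u = phi p" using good_range[OF assms] by blast
      then show "u \<in> phi ` {p. ev f p \<noteq> 0}" using nz by (auto simp: ev_def)
    qed
  qed (auto simp: ev_def)
  also have "(\<Sum>u\<in>phi ` {p. ev f p \<noteq> 0}. poly (f u) 0 * T u) = (\<Sum>p\<in>{p. ev f p \<noteq> 0}. ev f p * T (phi p))"
    by (subst sum.reindex) (auto intro: inj_on_subset[OF inj_phi] simp: ev_def)
  finally show ?thesis .
qed

lemma shS0w: "poly (shHw (phi p) (phi q) (phi x)) 0 = shCw p q x"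
  by (simp add: shHw_def shCw_def rev_phi shS0)

lemma ev_shH:
  assumes f: "goodA f" and g: "goodA g"
  shows "ev (shH f g) = shC (ev f) (ev g)"
proof
  fix x
  have "ev (shH f g) x = (\<Sum>u\<in>{u. f u \<noteq> 0}. poly (f u) 0 *
          (\<Sum>v\<in>{v. g v \<noteq> 0}. poly (g v) 0 * poly (shHw u v (phi x)) 0))"
    by (simp add: ev_def shH_def bilin_def lin_def poly_sum)
  also have "\<dots> = (\<Sum>u\<in>{u. f u \<noteq> 0}. poly (f u) 0 *
          (\<Sum>q\<in>{q. ev g q \<noteq> 0}. ev g q * poly (shHw u (phi q) (phi x)) 0))"
    by (simp add: reidx2[OF g])
  also have "\<dots> = (\<Sum>p\<in>{p. ev f p \<noteq> 0}. ev f p *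
          (\<Sum>q\<in>{q. ev g q \<noteq> 0}. ev g q * poly (shHw (phi p) (phi q) (phi x)) 0))"
    by (rule reidx2[OF f])
  also have "\<dots> = shC (ev f) (ev g) x"
    by (simp add: shC_def bilin_def lin_def shS0w)
  finally show "ev (shH f g) x = shC (ev f) (ev g) x" .
qed



definition pos :: "nat list \<Rightarrow> bool" where "pos ks \<longleftrightarrow> (\<forall>k\<in>set ks. 1 \<le> k)"

definition Kof :: "(Alet list \<Rightarrow> rat poly) \<Rightarrow> nat list \<Rightarrow> rat" where
  "Kof V ks = (if pos ks then poly (V (map G ks)) 0 else 0)"

lemma mapG_eq[simp]: "map G a = map G b \<longleftrightarrow> a = b"
  by (simp add: inj_map_eq_map inj_def)

lemma unG_G[simp]: "unG \<circ> G = id" by (auto simp: fun_eq_iff)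
lemma caseG_G[simp]: "(\<lambda>l. case l of G k \<Rightarrow> k | HB \<Rightarrow> 0) \<circ> G = id" by (auto simp: fun_eq_iff)
lemma HB_notin_G[simp]: "HB \<notin> G ` A" by auto
lemma unG_mapG[simp]: "map unG (map G ks) = ks" by simp

lemma fsupp_Kof: "fsupp V \<Longrightarrow> fsupp (Kof V)"
proof -
  assume "fsupp V"
  then have "finite (map unG ` {\<alpha>. V \<alpha> \<noteq> 0})" unfolding fsupp_def by simp
  moreover have "{ks. Kof V ks \<noteq> 0} \<subseteq> map unG ` {\<alpha>. V \<alpha> \<noteq> 0}"
  proof
    fix ks assume "ks \<in> {ks. Kof V ks \<noteq> 0}"
    then have "V (map G ks) \<noteq> 0" by (auto simp: Kof_def split: if_splits)
    then show "ks \<in> map unG ` {\<alpha>. V \<alpha> \<noteq> 0}" by (intro image_eqI[of _ _ "map G ks"]) auto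
  qed
  ultimately show ?thesis unfolding fsupp_def by (rule finite_subset[rotated])
qed

lemma reidx:
  assumes V: "V \<in> Areps" and S: "finite S" "{\<alpha>. poly (V \<alpha>) 0 \<noteq> 0} \<subseteq> S"
    and T: "\<And>\<alpha>. HB \<in> set \<alpha> \<Longrightarrow> T \<alpha> = 0"
  shows "(\<Sum>\<alpha>\<in>S. poly (V \<alpha>) 0 * T \<alpha>) = (\<Sum>ks\<in>{ks. Kof V ks \<noteq> 0}. Kof V ks * T (map G ks))"
proof -
  have ad: "\<And>\<alpha>. V \<alpha> \<noteq> 0 \<Longrightarrow> admA \<alpha>" using V by (auto simp: Areps_def)
  let ?S0 = "{\<alpha>. poly (V \<alpha>) 0 \<noteq> 0 \<and> HB \<notin> set \<alpha>}"
  have "(\<Sum>\<alpha>\<in>S. poly (V \<alpha>) 0 * T \<alpha>) = (\<Sum>\<alpha>\<in>?S0. poly (V \<alpha>) 0 * T \<alpha>)"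
    using S T by (intro sum.mono_neutral_right) auto
  also have "?S0 = map G ` {ks. Kof V ks \<noteq> 0}"
  proof
    show "?S0 \<subseteq> map G ` {ks. Kof V ks \<noteq> 0}"
    proof
      fix \<alpha> assume a: "\<alpha> \<in> ?S0"
      then have "admA \<alpha>" using ad by force
      with a HBfree[of \<alpha>] have e: "\<alpha> = map G (map unG \<alpha>)" and p: "pos (map unG \<alpha>)"
        by (auto simp: pos_def)
      have "Kof V (map unG \<alpha>) \<noteq> 0" using a p e by (auto simp: Kof_def)
      then show "\<alpha> \<in> map G ` {ks. Kof V ks \<noteq> 0}" using e by blast
    qed
  next
    show "map G ` {ks. Kof V ks \<noteq> 0} \<subseteq> ?S0"
      by (auto simp: Kof_def split: if_splits)
  qed
  also have "(\<Sum>\<alpha>\<in>map G ` {ks. Kof V ks \<noteq> 0}. poly (V \<alpha>) 0 * T \<alpha>)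
      = (\<Sum>ks\<in>{ks. Kof V ks \<noteq> 0}. poly (V (map G ks)) 0 * T (map G ks))"
    by (subst sum.reindex) (auto simp: inj_on_def)
  also have "\<dots> = (\<Sum>ks\<in>{ks. Kof V ks \<noteq> 0}. Kof V ks * T (map G ks))"
    by (rule sum.cong) (auto simp: Kof_def split: if_splits)
  finally show ?thesis .
qed

lemma iwA_mapG: "iwA (map G ks) = mono 1 (zw ks)"
proof -
  have "map (\<lambda>l. case l of G k \<Rightarrow> k | HB \<Rightarrow> 0) (map G ks) = ks" by (induct ks) auto
  then show ?thesis by (simp add: iwA_def)
qed

lemma lin_iota:
  assumes V: "V \<in> Areps"
  shows "lin (\<lambda>\<alpha>. poly (V \<alpha>) 0) iwA = lin (Kof V) (\<lambda>ks. mono 1 (zw ks))"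
proof
  fix x
  have fs: "fsupp V" using V by (auto simp: Areps_def)
  have fin: "finite {\<alpha>. poly (V \<alpha>) 0 \<noteq> 0}"
    using fs unfolding fsupp_def by (rule finite_subset[rotated]) auto
  have "lin (\<lambda>\<alpha>. poly (V \<alpha>) 0) iwA x = (\<Sum>\<alpha>\<in>{\<alpha>. poly (V \<alpha>) 0 \<noteq> 0}. poly (V \<alpha>) 0 * iwA \<alpha> x)"
    by (simp add: lin_def)
  also have "\<dots> = (\<Sum>ks\<in>{ks. Kof V ks \<noteq> 0}. Kof V ks * iwA (map G ks) x)"
    by (rule reidx[OF V fin]) (auto simp: iwA_def)
  also have "\<dots> = lin (Kof V) (\<lambda>ks. mono 1 (zw ks)) x"
    by (simp add: lin_def iwA_mapG)
  finally show "lin (\<lambda>\<alpha>. poly (V \<alpha>) 0) iwA x = lin (Kof V) (\<lambda>ks. mono 1 (zw ks)) x" .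
qed

lemma zw_inj: "pos ks \<Longrightarrow> pos ls \<Longrightarrow> zw ks = zw ls \<Longrightarrow> ks = ls"
  using phi_zw[of ks] phi_zw[of ls] word_inj[OF adm_mapG adm_mapG, of ks ls]
  by (auto simp: pos_def)

lemma Zreps_val:
  assumes "K \<in> Zreps" "pos ks"
  shows "lin K (\<lambda>ks. mono 1 (zw ks)) (zw ks) = K ks"
proof -
  have fs: "fsupp K" and p: "\<And>ls. K ls \<noteq> 0 \<Longrightarrow> pos ls" using assms(1) by (auto simp: Zreps_def pos_def)
  have "lin K (\<lambda>ks. mono 1 (zw ks)) (zw ks) = K ks * mono 1 (zw ks) (zw ks)"
  proof (rule lin_single[OF fs])
    fix ls assume "K ls \<noteq> 0" "ls \<noteq> ks"
    then show "mono 1 (zw ls) (zw ks) = 0" using zw_inj[OF p assms(2)] by (auto simp: mono_def)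
  qed
  then show ?thesis by (simp add: mono_def)
qed

lemma Zreps_unique:
  assumes "K1 \<in> Zreps" "K2 \<in> Zreps" "lin K1 (\<lambda>ks. mono 1 (zw ks)) = lin K2 (\<lambda>ks. mono 1 (zw ks))"
  shows "K1 = K2"
proof
  fix ks show "K1 ks = K2 ks"
  proof (cases "pos ks")
    case True then show ?thesis using Zreps_val[OF assms(1) True] Zreps_val[OF assms(2) True] assms(3) by metis
  next
    case False
    have "K1 ks = 0" using False assms(1) unfolding Zreps_def pos_def by blast
    moreover have "K2 ks = 0" using False assms(2) unfolding Zreps_def pos_def by blast
    ultimately show ?thesis by simp
  qed
qed

lemma Zrep_lin: "K \<in> Zreps \<Longrightarrow> Zrep (lin K (\<lambda>ks. mono 1 (zw ks))) = K"
  unfolding Zrep_def by (rule the_equality) (auto intro: Zreps_unique)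

lemma Kof_Zreps: "V \<in> Areps \<Longrightarrow> Kof V \<in> Zreps"
  unfolding Zreps_def using fsupp_Kof[of V] by (auto simp: Areps_def Kof_def pos_def)

lemma iota_Kof:
  assumes "f \<in> CA"
  shows "iota f = lin (Kof (Arep f)) (\<lambda>ks. mono 1 (zw ks))" "Zrep (iota f) = Kof (Arep f)"
proof -
  have A: "Arep f \<in> Areps" using Arep_CA[OF assms] by blast
  show i: "iota f = lin (Kof (Arep f)) (\<lambda>ks. mono 1 (zw ks))"
    unfolding iota_def by (rule lin_iota[OF A])
  show "Zrep (iota f) = Kof (Arep f)" unfolding i by (rule Zrep_lin[OF Kof_Zreps[OF A]])
qed

lemma iota_ev:
  assumes "f \<in> CA"
  shows "iota f = ev f"
proof
  fix x
  have A: "Arep f \<in> Areps" and fl: "lin (Arep f) embw = f" using Arep_CA[OF assms] by blast+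
  let ?V = "Arep f"
  have fs: "fsupp ?V" using A by (auto simp: Areps_def)
  have fin: "finite {\<alpha>. ?V \<alpha> \<noteq> 0}" using fs by (simp add: fsupp_def)
  have "ev f x = (\<Sum>\<alpha>\<in>{\<alpha>. ?V \<alpha> \<noteq> 0}. poly (?V \<alpha>) 0 * poly (embw \<alpha> (phi x)) 0)"
    unfolding ev_def by (subst fl[symmetric]) (simp add: lin_def poly_sum)
  also have "\<dots> = (\<Sum>ks\<in>{ks. Kof ?V ks \<noteq> 0}. Kof ?V ks * poly (embw (map G ks) (phi x)) 0)"
  proof (rule reidx[OF A fin])
    show "{\<alpha>. poly (?V \<alpha>) 0 \<noteq> 0} \<subseteq> {\<alpha>. ?V \<alpha> \<noteq> 0}" by auto
    fix \<alpha> :: "Alet list" assume "HB \<in> set \<alpha>"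
    then have "nHB \<alpha> \<noteq> 0" by (simp add: nHB0)
    then show "poly (embw \<alpha> (phi x)) 0 = 0" by (simp add: embw_eq)
  qed
  also have "\<dots> = (\<Sum>ks\<in>{ks. Kof ?V ks \<noteq> 0}. Kof ?V ks * mono 1 (zw ks) x)"
  proof (rule sum.cong)
    fix ks assume "ks \<in> {ks. Kof ?V ks \<noteq> 0}"
    then have p: "pos ks" by (auto simp: Kof_def split: if_splits)
    have n: "nHB (map G ks) = 0" by (simp add: nHB0)
    have "word (map G ks) = phi (zw ks)" using phi_zw[of ks] p by (simp add: pos_def)
    then have "poly (embw (map G ks) (phi x)) 0 = mono 1 (zw ks) x"
      using n by (auto simp: embw_eq mono_def dest: phi_inj)
    then show "Kof ?V ks * poly (embw (map G ks) (phi x)) 0 = Kof ?V ks * mono 1 (zw ks) x" by simp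
  qed simp
  also have "\<dots> = iota f x" using iota_Kof(1)[OF assms] by (simp add: lin_def)
  finally show "iota f x = ev f x" by simp
qed



lemma fsupp_harmR: "fsupp (harmR u v)"
  by (induct u v rule: harmR.induct)
     (auto intro!: fsupp_prep fsupp_add fsupp_cmult fsupp_mono)

lemma fsupp_harmA: "fsupp (harmA \<alpha> \<beta>)"
proof -
  have "finite (rev -` {t. harmR (rev \<alpha>) (rev \<beta>) t \<noteq> 0})"
    using fsupp_harmR[of "rev \<alpha>" "rev \<beta>"] unfolding fsupp_def by (intro finite_vimageI) auto
  then show ?thesis unfolding fsupp_def harmA_def by (simp add: vimage_def)
qed

lemma admA_Cons[simp]: "admA (l # r) \<longleftrightarrow> (\<forall>k. l = G k \<longrightarrow> 1 \<le> k) \<and> admA r"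
  by (auto simp: admA_def)
lemma admA_Nil[simp]: "admA []" by (simp add: admA_def)

lemma circA_adm: "(\<forall>k. u = G k \<longrightarrow> 1 \<le> k) \<Longrightarrow> (\<forall>k. v = G k \<longrightarrow> 1 \<le> k) \<Longrightarrow>
   (\<forall>k. snd (circA u v) = G k \<longrightarrow> 1 \<le> k)"
  by (cases u; cases v) auto

lemma harmR_adm: "admA u \<Longrightarrow> admA v \<Longrightarrow> harmR u v t \<noteq> 0 \<Longrightarrow> admA t"
proof (induct u v arbitrary: t rule: harmR.induct)
  case (1 w) then show ?case by (auto simp: mono_def split: if_splits)
next
  case (2 v va) then show ?case by (auto simp: mono_def split: if_splits)
next
  case (3 u w v w')
  have au: "\<forall>k. u = G k \<longrightarrow> 1 \<le> k" "admA w" using 3(4) by auto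
  have av: "\<forall>k. v = G k \<longrightarrow> 1 \<le> k" "admA w'" using 3(5) by auto
  from 3(6) consider
      (a) "prep u (harmR w (v # w')) t \<noteq> 0"
    | (b) "prep v (harmR (u # w) w') t \<noteq> 0"
    | (c) "prep (snd (circA u v)) (harmR w w') t \<noteq> 0"
    by (cases "prep u (harmR w (v # w')) t = 0"; cases "prep v (harmR (u # w) w') t = 0"; auto)
  then show ?case
  proof cases
    case a then obtain t' where "t = u # t'" "harmR w (v # w') t' \<noteq> 0" by (auto dest!: prep_nz)
    then show ?thesis using 3(1) au av 3(5) by auto
  next
    case b then obtain t' where "t = v # t'" "harmR (u # w) w' t' \<noteq> 0" by (auto dest!: prep_nz)
    then show ?thesis using 3(2) au av 3(4) by auto
  next
    case c then obtain t' where "t = snd (circA u v) # t'" "harmR w w' t' \<noteq> 0" by (auto dest!: prep_nz)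
    then show ?thesis using 3(3) au av circA_adm[OF au(1) av(1)] by auto
  qed
qed

lemma circA_HB: "u = HB \<or> v = HB \<Longrightarrow> fst (circA u v) = hbar"
  by (cases u; cases v) auto

lemma circA_GG: "circA (G k) (G l) = (1, G (k + l))" by simp

lemma harmR_L1: "HB \<in> set u \<or> HB \<in> set v \<Longrightarrow> HB \<notin> set t \<Longrightarrow> poly (harmR u v t) 0 = 0"
proof (induct u v arbitrary: t rule: harmR.induct)
  case (1 w) then show ?case by (auto simp: mono_def)
next
  case (2 v va) then show ?case by (auto simp: mono_def)
next
  case (3 u w v w')
  show ?case
  proof (cases t)
    case Nil then show ?thesis by simp
  next
    case (Cons m t')
    have m: "m \<noteq> HB" "HB \<notin> set t'" using 3(5) Cons by auto
    have A: "poly (prep u (harmR w (v # w')) t) 0 = 0"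
    proof (cases "m = u")
      case True
      then have "HB \<in> set w \<or> HB \<in> set (v # w')" using 3(4) m by auto
      then show ?thesis using 3(1)[of t'] m Cons True by simp
    qed (simp add: Cons)
    have B: "poly (prep v (harmR (u # w) w') t) 0 = 0"
    proof (cases "m = v")
      case True
      then have "HB \<in> set (u # w) \<or> HB \<in> set w'" using 3(4) m by auto
      then show ?thesis using 3(2)[of t'] m Cons True by simp
    qed (simp add: Cons)
    have C: "poly (fst (circA u v) * prep (snd (circA u v)) (harmR w w') t) 0 = 0"
    proof (cases "u = HB \<or> v = HB")
      case True then show ?thesis by (simp add: circA_HB)
    next
      case False
      then have "HB \<in> set w \<or> HB \<in> set w'" using 3(4) by auto
      then show ?thesis using 3(3)[of t'] m Cons by simp
    qed
    show ?thesis using A B C by simp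
  qed
qed

lemma harmR_L2: "poly (harmR (map G ks) (map G ls) (map G ms)) 0 = harmZR ks ls ms"
proof (induct ks ls arbitrary: ms rule: harmZR.induct)
  case (1 w) then show ?case by (simp add: mono_def)
next
  case (2 v va) then show ?case by (auto simp: mono_def map_eq_Cons_conv)
next
  case (3 k w l w')
  show ?case
  proof (cases ms)
    case Nil then show ?thesis by simp
  next
    case (Cons m ms')
    have i1: "poly (harmR (map G w) (G l # map G w') (map G ms')) 0 = harmZR w (l # w') ms'"
      using 3(1)[of ms'] by simp
    have i2: "poly (harmR (G k # map G w) (map G w') (map G ms')) 0 = harmZR (k # w) w' ms'"
      using 3(2)[of ms'] by simp
    have i3: "poly (harmR (map G w) (map G w') (map G ms')) 0 = harmZR w w' ms'"
      using 3(3)[of ms'] by simp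
    have "harmR (map G (k # w)) (map G (l # w')) (map G ms) =
      (if m = k then harmR (map G w) (G l # map G w') (map G ms') else 0) +
      (if m = l then harmR (G k # map G w) (map G w') (map G ms') else 0) +
      (if m = k + l then harmR (map G w) (map G w') (map G ms') else 0)"
      by (simp add: Cons)
    also have "poly \<dots> 0 = harmZR (k # w) (l # w') ms"
      by (simp only: poly_add harmZR.simps prep_Cons Cons if_distrib[where f = "\<lambda>p. poly p 0"] poly_0 i1 i2 i3)
    finally show ?thesis .
  qed
qed

lemma pos_Cons[simp]: "pos (k # r) \<longleftrightarrow> 1 \<le> k \<and> pos r" by (simp add: pos_def)

lemma harmZR_pos: "pos ks \<Longrightarrow> pos ls \<Longrightarrow> harmZR ks ls ms \<noteq> 0 \<Longrightarrow> pos ms"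
proof (induct ks ls arbitrary: ms rule: harmZR.induct)
  case (1 w) then show ?case by (auto simp: mono_def split: if_splits)
next
  case (2 v va) then show ?case by (auto simp: mono_def split: if_splits)
next
  case (3 k w l w')
  have pk: "1 \<le> k" "pos w" using 3(4) by simp_all
  have pl: "1 \<le> l" "pos w'" using 3(5) by simp_all
  have nz: "prep k (harmZR w (l # w')) ms + prep l (harmZR (k # w) w') ms + prep (k + l) (harmZR w w') ms \<noteq> 0"
    using 3(6) by simp
  consider
      (a) "prep k (harmZR w (l # w')) ms \<noteq> 0"
    | (b) "prep l (harmZR (k # w) w') ms \<noteq> 0"
    | (c) "prep (k + l) (harmZR w w') ms \<noteq> 0"
    using nz by fastforce
  then show ?case
  proof cases
    case a
    then obtain t' where t: "ms = k # t'" "harmZR w (l # w') t' \<noteq> 0" by (blast dest: prep_nz)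
    have "pos t'" by (rule 3(1)[OF pk(2) 3(5) t(2)])
    then show ?thesis using t pk by simp
  next
    case b
    then obtain t' where t: "ms = l # t'" "harmZR (k # w) w' t' \<noteq> 0" by (blast dest: prep_nz)
    have "pos t'" by (rule 3(2)[OF 3(4) pl(2) t(2)])
    then show ?thesis using t pl by simp
  next
    case c
    then obtain t' where t: "ms = (k + l) # t'" "harmZR w w' t' \<noteq> 0" by (blast dest: prep_nz)
    have "pos t'" by (rule 3(3)[OF pk(2) pl(2) t(2)])
    then show ?thesis using t pk by simp
  qed
qed

lemma harm_Areps:
  assumes "V \<in> Areps" "W \<in> Areps"
  shows "bilin V W harmA \<in> Areps"
proof -
  have fV: "fsupp V" and aV: "\<And>\<alpha>. V \<alpha> \<noteq> 0 \<Longrightarrow> admA \<alpha>" using assms(1) by (auto simp: Areps_def)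
  have fW: "fsupp W" and aW: "\<And>\<alpha>. W \<alpha> \<noteq> 0 \<Longrightarrow> admA \<alpha>" using assms(2) by (auto simp: Areps_def)
  have "fsupp (bilin V W harmA)" by (rule fsupp_bilin[OF fV fW fsupp_harmA])
  moreover have "admA \<gamma>" if nz: "bilin V W harmA \<gamma> \<noteq> 0" for \<gamma>
  proof -
    obtain \<alpha> \<beta> where ab: "V \<alpha> \<noteq> 0" "W \<beta> \<noteq> 0" "harmA \<alpha> \<beta> \<gamma> \<noteq> 0"
      using bilin_nz[of V W harmA \<gamma>] nz by auto
    have "admA (rev \<alpha>)" "admA (rev \<beta>)" using aV[OF ab(1)] aW[OF ab(2)] by (auto simp: admA_def)
    moreover have "harmR (rev \<alpha>) (rev \<beta>) (rev \<gamma>) \<noteq> 0" using ab(3) by (simp add: harmA_def)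
    ultimately have "admA (rev \<gamma>)" by (rule harmR_adm)
    then show ?thesis by (auto simp: admA_def)
  qed
  ultimately show ?thesis by (auto simp: Areps_def)
qed

lemma Kof_harm:
  assumes V: "V \<in> Areps" and W: "W \<in> Areps"
  shows "Kof (bilin V W harmA) = bilin (Kof V) (Kof W) harmZ"
proof
  fix ms
  have fV: "finite {\<alpha>. V \<alpha> \<noteq> 0}" and fW: "finite {\<alpha>. W \<alpha> \<noteq> 0}"
    using V W by (auto simp: Areps_def fsupp_def)
  show "Kof (bilin V W harmA) ms = bilin (Kof V) (Kof W) harmZ ms"
  proof (cases "pos ms")
    case False
    have "harmZ ks ls ms = 0" if "Kof V ks \<noteq> 0" "Kof W ls \<noteq> 0" for ks ls
    proof -
      have "pos ks" "pos ls" using that by (auto simp: Kof_def split: if_splits)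
      then have "pos (rev ks)" "pos (rev ls)" by (simp_all add: pos_def)
      moreover have "\<not> pos (rev ms)" using False by (simp add: pos_def)
      ultimately have "harmZR (rev ks) (rev ls) (rev ms) = 0" using harmZR_pos by blast
      then show ?thesis by (simp add: harmZ_def)
    qed
    then show ?thesis using False
      by (auto simp: Kof_def bilin_def lin_def intro!: sum.neutral)
  next
    case True
    let ?g = "map G ms"
    have L1: "poly (harmA \<alpha> \<beta> ?g) 0 = 0" if hb: "HB \<in> set \<alpha> \<or> HB \<in> set \<beta>" for \<alpha> \<beta>
    proof -
      have "HB \<in> set (rev \<alpha>) \<or> HB \<in> set (rev \<beta>)" using hb by simp
      moreover have "HB \<notin> set (rev ?g)" by simp
      ultimately have "poly (harmR (rev \<alpha>) (rev \<beta>) (rev ?g)) 0 = 0" by (rule harmR_L1)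
      then show ?thesis by (simp add: harmA_def)
    qed
    have "Kof (bilin V W harmA) ms = (\<Sum>\<alpha>\<in>{\<alpha>. V \<alpha> \<noteq> 0}. poly (V \<alpha>) 0 *
         (\<Sum>\<beta>\<in>{\<beta>. W \<beta> \<noteq> 0}. poly (W \<beta>) 0 * poly (harmA \<alpha> \<beta> ?g) 0))"
      using True by (simp add: Kof_def bilin_def lin_def poly_sum)
    also have "\<dots> = (\<Sum>\<alpha>\<in>{\<alpha>. V \<alpha> \<noteq> 0}. poly (V \<alpha>) 0 *
         (\<Sum>ls\<in>{ls. Kof W ls \<noteq> 0}. Kof W ls * poly (harmA \<alpha> (map G ls) ?g) 0))"
      by (intro sum.cong refl arg_cong2[where f = "(*)"] reidx[OF W fW]) (auto intro: L1)
    also have "\<dots> = (\<Sum>ks\<in>{ks. Kof V ks \<noteq> 0}. Kof V ks *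
         (\<Sum>ls\<in>{ls. Kof W ls \<noteq> 0}. Kof W ls * poly (harmA (map G ks) (map G ls) ?g) 0))"
      by (rule reidx[OF V fV]) (auto intro!: sum.neutral simp: L1)
    also have "\<dots> = bilin (Kof V) (Kof W) harmZ ms"
      by (simp add: bilin_def lin_def harmA_def harmZ_def rev_map harmR_L2)
    finally show ?thesis .
  qed
qed

theorem proposition3p9:
  assumes "w \<in> CA" and "w' \<in> CA"
  shows "iota (harmH w w') = harmC (iota w) (iota w')
       \<and> iota (shH w w') = shC (iota w) (iota w')"
proof
  let ?V = "Arep w" and ?W = "Arep w'"
  have V: "?V \<in> Areps" using Arep_CA[OF assms(1)] by blast
  have W: "?W \<in> Areps" using Arep_CA[OF assms(2)] by blast
  have H: "bilin ?V ?W harmA \<in> Areps" by (rule harm_Areps[OF V W])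
  have hH: "harmH w w' = lin (bilin ?V ?W harmA) embw" by (simp add: harmH_def)
  have hCA: "harmH w w' \<in> CA" using H hH by (auto simp: CA_def)
  have AH: "Arep (harmH w w') = bilin ?V ?W harmA" using Arep_lin[OF H] hH by simp
  show "iota (harmH w w') = harmC (iota w) (iota w')"
    unfolding harmC_def iota_Kof(2)[OF assms(1)] iota_Kof(2)[OF assms(2)] iota_Kof(1)[OF hCA] AH
      Kof_harm[OF V W] ..
next
  show "iota (shH w w') = shC (iota w) (iota w')"
    using iota_ev[OF shH_CA[OF assms]] iota_ev[OF assms(1)] iota_ev[OF assms(2)]
      ev_shH[OF CA_good[OF assms(1)] CA_good[OF assms(2)]] by simp
qed

end
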